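(* Let $R$ be a finite chain ring of length $2$ with residue field $\mathbb{F}_q$ and let $1\le n\le q^2+q$. Then $$\mathrm{m}_n(R)\le\left\lfloor\frac{(q+1)n-q}{q+2}\cdot(q^2+q+1)\right\rfloor.$$
   Context: Throughout, $R$ is a finite chain ring of nilpotency index (length) $2$, i.e. a finite local ring with radical $\mathrm{rad}R\neq 0$, $(\mathrm{rad}R)^2=0$, whose one-sided ideals form the chain $R\supsetneq\mathrm{rad}R\supsetneq 0$, with residue field $R/\mathrm{rad}R\cong\mathbb{F}_q$ ($q$ a prime power); then $|R|=q^2$. The projective Hjelmslev plane $\mathrm{PHG}(2,R)$ is the incidence structure whose points are the free rank-$1$ submodules of the right module $R_R^3$, whose lines are the free rank-$2$ submodules of $R_R^3$, with incidence given by inclusion; it has $q^4+q^3+q^2$ points and each line contains $q^2+q$ points. A $(k,n)$-arc is a map $\mathcal{K}$ from the point set to $\mathbb{N}_0$ with $\sum_x\mathcal{K}(x)=k$ and $\sum_{x\in L}\mathcal{K}(x)\le n$ for every line $L$; it is projective if $\mathcal{K}$ takes only values in $\{0,1\}$ (i.e. it is a set of $k$ points meeting every line in at most $n$ points). For $0\le n\le q^2+q$, $\mathrm{m}_n(R)$ denotes the largest $k$ such that a projective $(k,n)$-arc exists in $\mathrm{PHG}(2,R)$. *)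

theory Defs
  imports Complex_Main
begin

definition right_ideal :: "'a::ring_1 set \<Rightarrow> bool" where
  "right_ideal I \<longleftrightarrow> 0 \<in> I \<and> (\<forall>x\<in>I. \<forall>y\<in>I. x + y \<in> I) \<and> (\<forall>x\<in>I. - x \<in> I)
     \<and> (\<forall>x\<in>I. \<forall>r. x * r \<in> I)"

definition left_ideal :: "'a::ring_1 set \<Rightarrow> bool" where
  "left_ideal I \<longleftrightarrow> 0 \<in> I \<and> (\<forall>x\<in>I. \<forall>y\<in>I. x + y \<in> I) \<and> (\<forall>x\<in>I. - x \<in> I)
     \<and> (\<forall>x\<in>I. \<forall>r. r * x \<in> I)"

definition chain_ring_len2 :: "'a::{ring_1,finite} set \<Rightarrow> bool" where
  "chain_ring_len2 N \<longleftrightarrow>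
     N \<noteq> {0} \<and> N \<noteq> UNIV \<and> (\<forall>x\<in>N. \<forall>y\<in>N. x * y = 0) \<and>
     {I. right_ideal I} = {UNIV, N, {0}} \<and> {I. left_ideal I} = {UNIV, N, {0}}"

definition smulr :: "'a::ring_1 \<times> 'a \<times> 'a \<Rightarrow> 'a \<Rightarrow> 'a \<times> 'a \<times> 'a" where
  "smulr v r = (case v of (a, b, c) \<Rightarrow> (a * r, b * r, c * r))"

definition vadd :: "'a::ring_1 \<times> 'a \<times> 'a \<Rightarrow> 'a \<times> 'a \<times> 'a \<Rightarrow> 'a \<times> 'a \<times> 'a" where
  "vadd v w = (case v of (a, b, c) \<Rightarrow> case w of (a', b', c') \<Rightarrow> (a + a', b + b', c + c'))"

text \<open>Points: free rank-1 submodules of R_R^3; lines: free rank-2 submodules.\<close>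
definition PHG_points :: "('a::ring_1 \<times> 'a \<times> 'a) set set" where
  "PHG_points = {P. \<exists>v. P = range (smulr v) \<and> inj (smulr v)}"

definition PHG_lines :: "('a::ring_1 \<times> 'a \<times> 'a) set set" where
  "PHG_lines = {L. \<exists>u w. L = range (\<lambda>(r, s). vadd (smulr u r) (smulr w s))
                      \<and> inj (\<lambda>(r, s). vadd (smulr u r) (smulr w s))}"

definition proj_arc :: "('a::ring_1 \<times> 'a \<times> 'a) set set \<Rightarrow> nat \<Rightarrow> nat \<Rightarrow> bool" where
  "proj_arc S k n \<longleftrightarrow> S \<subseteq> PHG_points \<and> finite S \<and> card S = k \<and>
     (\<forall>L\<in>PHG_lines. card {x\<in>S. x \<subseteq> L} \<le> n)"

definition m_n :: "'a::{ring_1,finite} itself \<Rightarrow> nat \<Rightarrow> nat" where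
  "m_n (_ :: 'a itself) n = Max {k. \<exists>S :: ('a \<times> 'a \<times> 'a) set set. proj_arc S k n}"

end

theory Submission
  imports Defs
begin

lemma smulr_simp[simp]: "smulr (a,b,c) r = (a*r, b*r, c*r)" by (simp add: smulr_def)
lemma vadd_simp[simp]: "vadd (a,b,c) (a',b',c') = (a+a', b+b', c+c')" by (simp add: vadd_def)

definition spanf :: "'a::ring_1 \<times> 'a \<times> 'a \<Rightarrow> 'a \<times> 'a \<times> 'a \<Rightarrow> 'a \<times> 'a \<Rightarrow> 'a \<times> 'a \<times> 'a" where
  "spanf u w = (\<lambda>(r,s). vadd (smulr u r) (smulr w s))"

lemma spanf_simp[simp]: "spanf (a,b,c) (a',b',c') (r,s) = (a*r+a'*s, b*r+b'*s, c*r+c'*s)"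
  by (simp add: spanf_def)

lemma lines_iff: "L \<in> PHG_lines \<longleftrightarrow> (\<exists>u w. L = range (spanf u w) \<and> inj (spanf u w))"
  by (simp add: PHG_lines_def spanf_def)

lemma points_iff: "P \<in> PHG_points \<longleftrightarrow> (\<exists>v. P = range (smulr v) \<and> inj (smulr v))"
  by (simp add: PHG_points_def)

lemma span_sub:
  fixes u w x y :: "'a::ring_1 \<times> 'a \<times> 'a"
  assumes "x \<in> range (spanf u w)" "y \<in> range (spanf u w)"
  shows "range (spanf x y) \<subseteq> range (spanf u w)"
proof
  fix z assume "z \<in> range (spanf x y)"
  then obtain r s where z: "z = spanf x y (r,s)" by auto
  obtain a b where x: "x = spanf u w (a,b)" using assms(1) by auto
  obtain c d where y: "y = spanf u w (c,d)" using assms(2) by auto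
  obtain u1 u2 u3 where u: "u = (u1,u2,u3)" by (cases u) auto
  obtain w1 w2 w3 where w: "w = (w1,w2,w3)" by (cases w) auto
  have "z = spanf u w (a*r + c*s, b*r + d*s)"
    by (simp add: z x y u w algebra_simps)
  thus "z \<in> range (spanf u w)" by blast
qed

lemma span_comm: "range (spanf u w) = range (spanf w u)"
proof -
  have "\<And>u w :: 'a \<times> 'a \<times> 'a. range (spanf u w) \<subseteq> range (spanf w u)"
  proof
    fix u w z :: "'a \<times> 'a \<times> 'a" assume "z \<in> range (spanf u w)"
    then obtain r s where z: "z = spanf u w (r,s)" by auto
    obtain u1 u2 u3 where u: "u = (u1,u2,u3)" by (cases u) auto
    obtain w1 w2 w3 where w: "w = (w1,w2,w3)" by (cases w) auto
    have "z = spanf w u (s,r)" by (simp add: z u w algebra_simps)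
    thus "z \<in> range (spanf w u)" by blast
  qed
  thus ?thesis by blast
qed

lemma span_mem1: "u \<in> range (spanf u w)"
proof -
  obtain u1 u2 u3 where u: "u = (u1,u2,u3)" by (cases u) auto
  obtain w1 w2 w3 where w: "w = (w1,w2,w3)" by (cases w) auto
  have "u = spanf u w (1,0)" by (simp add: u w)
  thus ?thesis by blast
qed

lemma span_mem2: "w \<in> range (spanf u w)"
  using span_mem1 span_comm by blast

lemma point_sub_span:
  assumes "v \<in> range (spanf u w)"
  shows "range (smulr v) \<subseteq> range (spanf u w)"
proof
  fix z assume "z \<in> range (smulr v)"
  then obtain t where z: "z = smulr v t" by auto
  obtain a b where x: "v = spanf u w (a,b)" using assms(1) by auto
  obtain u1 u2 u3 where u: "u = (u1,u2,u3)" by (cases u) auto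
  obtain w1 w2 w3 where w: "w = (w1,w2,w3)" by (cases w) auto
  have "z = spanf u w (a*t, b*t)" by (simp add: z x u w algebra_simps)
  thus "z \<in> range (spanf u w)" by blast
qed

lemma inj_transfer:
  fixes f g :: "'b::finite \<Rightarrow> 'c"
  assumes "range f = range g" "inj g" shows "inj f"
proof -
  have "card (range g) = card (UNIV :: 'b set)" using assms(2) by (simp add: card_image)
  hence "card (range f) = card (UNIV :: 'b set)" using assms(1) by simp
  thus ?thesis by (intro eq_card_imp_inj_on) auto
qed

locale cr2 =
  fixes N :: "'a::{ring_1,finite} set"
  assumes cr: "chain_ring_len2 N"
begin

lemma rI: "right_ideal N" using cr unfolding chain_ring_len2_def by blast
lemma lI: "left_ideal N" using cr unfolding chain_ring_len2_def by blast
lemma rcases: "right_ideal I \<Longrightarrow> I = UNIV \<or> I = N \<or> I = {0}"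
  using cr unfolding chain_ring_len2_def by blast
lemma lcases: "left_ideal I \<Longrightarrow> I = UNIV \<or> I = N \<or> I = {0}"
  using cr unfolding chain_ring_len2_def by blast
lemma N0: "0 \<in> N" using rI by (simp add: right_ideal_def)
lemma Nadd: "x \<in> N \<Longrightarrow> y \<in> N \<Longrightarrow> x + y \<in> N" using rI by (simp add: right_ideal_def)
lemma Nneg: "x \<in> N \<Longrightarrow> - x \<in> N" using rI by (simp add: right_ideal_def)
lemma Ndiff: "x \<in> N \<Longrightarrow> y \<in> N \<Longrightarrow> x - y \<in> N" using Nadd Nneg by (metis diff_conv_add_uminus)
lemma Nmr: "x \<in> N \<Longrightarrow> x * r \<in> N" using rI by (simp add: right_ideal_def)
lemma Nml: "x \<in> N \<Longrightarrow> r * x \<in> N" using lI by (simp add: left_ideal_def)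
lemma NN: "x \<in> N \<Longrightarrow> y \<in> N \<Longrightarrow> x * y = 0" using cr by (simp add: chain_ring_len2_def)
lemma Nne0: "N \<noteq> {0}" using cr by (simp add: chain_ring_len2_def)
lemma NneU: "N \<noteq> UNIV" using cr by (simp add: chain_ring_len2_def)
lemma one_notin: "1 \<notin> N" using NneU Nmr by (metis UNIV_eq_I mult_1)
lemma ex_nz: "\<exists>a\<in>N. a \<noteq> 0" using Nne0 N0 by blast

lemma unit_ex:
  assumes "x \<notin> N" shows "\<exists>y. x * y = 1 \<and> y * x = 1"
proof -
  have ri: "right_ideal (range (\<lambda>r. x * r))"
    unfolding right_ideal_def
  proof (intro conjI ballI allI)
    show "0 \<in> range (\<lambda>r. x * r)" by (rule range_eqI[of _ _ 0]) simp
    fix a b assume "a \<in> range (\<lambda>r. x * r)" "b \<in> range (\<lambda>r. x * r)"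
    then obtain a' b' where "a = x*a'" "b = x*b'" by auto
    thus "a + b \<in> range (\<lambda>r. x * r)" by (intro range_eqI[of _ _ "a'+b'"]) (simp add: distrib_left)
  next
    fix a assume "a \<in> range (\<lambda>r. x * r)"
    then obtain a' where "a = x*a'" by auto
    thus "- a \<in> range (\<lambda>r. x * r)" by (intro range_eqI[of _ _ "-a'"]) simp
  next
    fix a r assume "a \<in> range (\<lambda>r. x * r)"
    then obtain a' where "a = x*a'" by auto
    thus "a * r \<in> range (\<lambda>r. x * r)" by (intro range_eqI[of _ _ "a'*r"]) (simp add: mult.assoc)
  qed
  have "x \<in> range (\<lambda>r. x * r)" by (metis mult_1_right rangeI)
  moreover have "x \<noteq> 0" using assms N0 by auto
  ultimately have "range (\<lambda>r. x * r) = UNIV" using rcases[OF ri] assms by auto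
  then obtain y where y: "x * y = 1" by (metis UNIV_I image_iff)
  have li: "left_ideal (range (\<lambda>r. r * x))"
    unfolding left_ideal_def
  proof (intro conjI ballI allI)
    show "0 \<in> range (\<lambda>r. r * x)" by (rule range_eqI[of _ _ 0]) simp
    fix a b assume "a \<in> range (\<lambda>r. r * x)" "b \<in> range (\<lambda>r. r * x)"
    then obtain a' b' where "a = a'*x" "b = b'*x" by auto
    thus "a + b \<in> range (\<lambda>r. r * x)" by (intro range_eqI[of _ _ "a'+b'"]) (simp add: distrib_right)
  next
    fix a assume "a \<in> range (\<lambda>r. r * x)"
    then obtain a' where "a = a'*x" by auto
    thus "- a \<in> range (\<lambda>r. r * x)" by (intro range_eqI[of _ _ "-a'"]) simp
  next
    fix a r assume "a \<in> range (\<lambda>r. r * x)"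
    then obtain a' where "a = a'*x" by auto
    thus "r * a \<in> range (\<lambda>r. r * x)" by (intro range_eqI[of _ _ "r*a'"]) (simp add: mult.assoc)
  qed
  have "x \<in> range (\<lambda>r. r * x)" by (metis mult_1_left rangeI)
  hence "range (\<lambda>r. r * x) = UNIV" using lcases[OF li] assms \<open>x \<noteq> 0\<close> by auto
  then obtain z where z: "z * x = 1" by (metis UNIV_I image_iff)
  have "z = y" by (metis mult.assoc mult_1_left mult_1_right y z)
  thus ?thesis using y z by blast
qed

lemma unit_notin: "x * y = 1 \<Longrightarrow> x \<notin> N" using one_notin Nmr by metis
lemma unit_notin2: "x * y = 1 \<Longrightarrow> y \<notin> N" using one_notin Nml by metis
lemma unit_add: "x \<notin> N \<Longrightarrow> n \<in> N \<Longrightarrow> x + n \<notin> N"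
  using Ndiff by (metis add_diff_cancel)

end

lemma card_range_eq:
  fixes f :: "'b \<Rightarrow> 'c" and g :: "'b \<Rightarrow> 'd"
  assumes "\<And>x y. f x = f y \<longleftrightarrow> g x = g y"
  shows "card (range f) = card (range g)"
proof -
  have "range f = (\<lambda>y. f (inv g y)) ` range g"
  proof -
    have "\<And>x. f (inv g (g x)) = f x" using assms by (metis f_inv_into_f rangeI)
    thus ?thesis by (auto simp: image_iff)
  qed
  moreover have "inj_on (\<lambda>y. f (inv g y)) (range g)"
    by (rule inj_onI) (metis assms f_inv_into_f)
  ultimately show ?thesis by (simp add: card_image)
qed

context cr2 begin

definition coset :: "'a \<Rightarrow> 'a set" where "coset x = (\<lambda>n. x + n) ` N"

lemma coset_eq: "coset x = coset y \<longleftrightarrow> x - y \<in> N"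
proof
  assume "coset x = coset y"
  hence "x \<in> coset y" unfolding coset_def using N0 by (metis add_0_right image_eqI)
  then obtain n where "n \<in> N" "x = y + n" unfolding coset_def by auto
  thus "x - y \<in> N" by simp
next
  assume h: "x - y \<in> N"
  have "coset x \<subseteq> coset y"
  proof
    fix z assume "z \<in> coset x"
    then obtain n where n: "n \<in> N" "z = x + n" unfolding coset_def by auto
    have "z = y + ((x - y) + n)" using n by (simp add: algebra_simps)
    thus "z \<in> coset y" unfolding coset_def using Nadd[OF h n(1)] by blast
  qed
  moreover have "coset y \<subseteq> coset x"
  proof
    fix z assume "z \<in> coset y"
    then obtain n where n: "n \<in> N" "z = y + n" unfolding coset_def by auto
    have "z = x + (-(x - y) + n)" using n by (simp add: algebra_simps)
    thus "z \<in> coset x" unfolding coset_def using Nadd[OF Nneg[OF h] n(1)] by blast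
  qed
  ultimately show "coset x = coset y" by blast
qed

lemma card_coset: "card (coset x) = card N"
  unfolding coset_def by (rule card_image) (simp add: inj_on_def)

lemma card_cosets_mult: "card N * card (range coset) = card (UNIV :: 'a set)"
proof -
  have u: "\<Union> (range coset) = UNIV"
    by (auto simp: coset_def) (metis N0 add_0_right image_eqI)
  have "card N * card (range coset) = card (\<Union> (range coset))"
  proof (rule card_partition)
    show "\<And>c. c \<in> range coset \<Longrightarrow> card c = card N" by (auto simp: card_coset)
    show "\<And>c1 c2. c1\<in>range coset \<Longrightarrow> c2\<in>range coset \<Longrightarrow> c1 \<noteq> c2 \<Longrightarrow> c1 \<inter> c2 = {}"
    proof -
      fix c1 c2 assume "c1 \<in> range coset" "c2 \<in> range coset" "c1 \<noteq> c2"
      then obtain x y where xy: "c1 = coset x" "c2 = coset y" "coset x \<noteq> coset y" by auto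
      show "c1 \<inter> c2 = {}"
      proof (rule ccontr)
        assume "c1 \<inter> c2 \<noteq> {}"
        then obtain z where z: "z \<in> coset x" "z \<in> coset y" using xy by auto
        then obtain n m where "n \<in> N" "m \<in> N" "z = x + n" "z = y + m"
          unfolding coset_def by auto
        hence "x - y = m - n" by (simp add: algebra_simps)
        hence "x - y \<in> N" using Ndiff \<open>n \<in> N\<close> \<open>m \<in> N\<close> by simp
        thus False using xy coset_eq by simp
      qed
    qed
  qed auto
  thus ?thesis using u by simp
qed

lemma rann:
  assumes "a \<in> N" "a \<noteq> 0" shows "a * r = 0 \<longleftrightarrow> r \<in> N"
proof
  assume "r \<in> N" thus "a * r = 0" using NN assms by blast
next
  assume ar: "a * r = 0"
  have ri: "right_ideal {t. a * t = 0}"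
    unfolding right_ideal_def by (auto simp: distrib_left mult.assoc[symmetric])
  have "N \<subseteq> {t. a * t = 0}" using NN assms by blast
  moreover have "1 \<notin> {t. a * t = 0}" using assms by simp
  ultimately have "{t. a * t = 0} = N" using rcases[OF ri] Nne0 N0 by blast
  thus "r \<in> N" using ar by blast
qed

lemma rgen:
  assumes "a \<in> N" "a \<noteq> 0" shows "range (\<lambda>r. a * r) = N"
proof -
  have ri: "right_ideal (range (\<lambda>r. a * r))"
    unfolding right_ideal_def
  proof (intro conjI ballI allI)
    show "0 \<in> range (\<lambda>r. a * r)" by (rule range_eqI[of _ _ 0]) simp
    fix x y assume "x \<in> range (\<lambda>r. a * r)" "y \<in> range (\<lambda>r. a * r)"
    then obtain x' y' where "x = a*x'" "y = a*y'" by auto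
    thus "x + y \<in> range (\<lambda>r. a * r)" by (intro range_eqI[of _ _ "x'+y'"]) (simp add: distrib_left)
  next
    fix x assume "x \<in> range (\<lambda>r. a * r)"
    then obtain x' where "x = a*x'" by auto
    thus "- x \<in> range (\<lambda>r. a * r)" by (intro range_eqI[of _ _ "-x'"]) simp
  next
    fix x r assume "x \<in> range (\<lambda>r. a * r)"
    then obtain x' where "x = a*x'" by auto
    thus "x * r \<in> range (\<lambda>r. a * r)" by (intro range_eqI[of _ _ "x'*r"]) (simp add: mult.assoc)
  qed
  have sub: "range (\<lambda>r. a * r) \<subseteq> N" using Nmr assms by auto
  have "a \<in> range (\<lambda>r. a * r)" by (metis mult_1_right rangeI)
  thus ?thesis using rcases[OF ri] sub NneU assms by blast
qed

lemma lgen: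
  assumes "a \<in> N" "a \<noteq> 0" "b \<in> N" shows "\<exists>c. c * a = b"
proof -
  have li: "left_ideal (range (\<lambda>r. r * a))"
    unfolding left_ideal_def
  proof (intro conjI ballI allI)
    show "0 \<in> range (\<lambda>r. r * a)" by (rule range_eqI[of _ _ 0]) simp
    fix x y assume "x \<in> range (\<lambda>r. r * a)" "y \<in> range (\<lambda>r. r * a)"
    then obtain x' y' where "x = x'*a" "y = y'*a" by auto
    thus "x + y \<in> range (\<lambda>r. r * a)" by (intro range_eqI[of _ _ "x'+y'"]) (simp add: distrib_right)
  next
    fix x assume "x \<in> range (\<lambda>r. r * a)"
    then obtain x' where "x = x'*a" by auto
    thus "- x \<in> range (\<lambda>r. r * a)" by (intro range_eqI[of _ _ "-x'"]) simp
  next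
    fix x r assume "x \<in> range (\<lambda>r. r * a)"
    then obtain x' where "x = x'*a" by auto
    thus "r * x \<in> range (\<lambda>r. r * a)" by (intro range_eqI[of _ _ "r*x'"]) (simp add: mult.assoc)
  qed
  have sub: "range (\<lambda>r. r * a) \<subseteq> N" using Nml assms by auto
  have "a \<in> range (\<lambda>r. r * a)" by (metis mult_1_left rangeI)
  hence "range (\<lambda>r. r * a) = N" using lcases[OF li] sub NneU assms by blast
  thus ?thesis using assms(3) by (metis image_iff)
qed

lemma card_N_cosets: "card (range coset) = card N"
proof -
  obtain a where a: "a \<in> N" "a \<noteq> 0" using ex_nz by blast
  have "card (range coset) = card (range (\<lambda>r. a * r))"
  proof (rule card_range_eq)
    fix x y
    have "a * x = a * y \<longleftrightarrow> a * (x - y) = 0" by (simp add: right_diff_distrib)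
    thus "coset x = coset y \<longleftrightarrow> a * x = a * y" using coset_eq rann[OF a] by simp
  qed
  thus ?thesis using rgen[OF a] by simp
qed

lemma card_N:
  assumes "card (UNIV :: 'a set) = q * card N"
  shows "card N = q" "card (range coset) = q" "card (UNIV :: 'a set) = q * q"
proof -
  have "card N > 0" using N0 by (auto simp add: card_gt_0_iff)
  hence "card (range coset) = q" using card_cosets_mult assms by (metis mult.commute mult_right_cancel
        neq0_conv)
  thus "card N = q" "card (range coset) = q" "card (UNIV :: 'a set) = q * q"
    using card_N_cosets assms by auto
qed

end

lemma span_eq:
  assumes "x \<in> range (spanf u w)" "y \<in> range (spanf u w)"
    "u \<in> range (spanf x y)" "w \<in> range (spanf x y)"
  shows "range (spanf x y) = range (spanf u w)"
  using span_sub assms by (metis subset_antisym)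

lemma inj_span1: "inj (spanf (1::'a::ring_1,b,c) (0,1,d))"
proof (rule injI)
  fix p p' :: "'a \<times> 'a" assume h: "spanf (1,b,c) (0,1,d) p = spanf (1,b,c) (0,1,d) p'"
  obtain r s where p: "p = (r,s)" by (cases p)
  obtain r' s' where p': "p' = (r',s')" by (cases p')
  from h show "p = p'" by (auto simp: p p')
qed

lemma inj_span2: "inj (spanf (1::'a::ring_1,b,c) (0,x,1))"
proof (rule injI)
  fix p p' :: "'a \<times> 'a" assume h: "spanf (1,b,c) (0,x,1) p = spanf (1,b,c) (0,x,1) p'"
  obtain r s where p: "p = (r,s)" by (cases p)
  obtain r' s' where p': "p' = (r',s')" by (cases p')
  from h show "p = p'" by (auto simp: p p')
qed

context cr2 begin

definition Zset :: "('a \<times> 'a \<times> 'a) set" where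
  "Zset = (\<lambda>c. (0,1,c)) ` UNIV \<union> (\<lambda>n. (0,n,1)) ` N"

lemma card_Zset: "card Zset \<le> card (UNIV :: 'a set) + card N"
proof -
  have "card Zset \<le> card ((\<lambda>c::'a. (0::'a,1::'a,c)) ` UNIV) + card ((\<lambda>n. (0::'a,n,1::'a)) ` N)"
    unfolding Zset_def by (rule card_Un_le)
  also have "\<dots> \<le> card (UNIV :: 'a set) + card N"
    by (intro add_mono card_image_le) auto
  finally show ?thesis .
qed

lemma Zset_lines: "z \<in> Zset \<Longrightarrow> range (spanf (1,b,c) z) \<in> PHG_lines"
  unfolding Zset_def lines_iff using inj_span1 inj_span2 by blast

lemma lineA:
  assumes L: "L \<in> PHG_lines" and sub: "range (smulr (1,b,c)) \<subseteq> L"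
  shows "\<exists>z\<in>Zset. L = range (spanf (1,b,c) z)"
proof -
  define v where "v = (1::'a,b,c)"
  obtain u w where Luw: "L = range (spanf u w)" "inj (spanf u w)" using L lines_iff by blast
  have "v \<in> L" using sub unfolding v_def by (metis mult_1_right rangeI smulr_simp subsetD)
  then obtain \<alpha> \<beta> where vab: "v = spanf u w (\<alpha>, \<beta>)" using Luw by auto
  have ab: "\<alpha> \<notin> N \<or> \<beta> \<notin> N"
  proof (rule ccontr)
    assume "\<not> (\<alpha> \<notin> N \<or> \<beta> \<notin> N)"
    hence "\<alpha> \<in> N" "\<beta> \<in> N" by auto
    obtain u1 u2 u3 where u: "u = (u1,u2,u3)" by (cases u) auto
    obtain w1 w2 w3 where w: "w = (w1,w2,w3)" by (cases w) auto
    have "1 = u1*\<alpha> + w1*\<beta>" using vab by (simp add: v_def u w)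
    hence "1 \<in> N" using Nadd Nml \<open>\<alpha> \<in> N\<close> \<open>\<beta> \<in> N\<close> by metis
    thus False using one_notin by simp
  qed
  obtain u' w' \<alpha>' \<beta>' where L2: "L = range (spanf u' w')" "inj (spanf u' w')"
     "v = spanf u' w' (\<alpha>', \<beta>')" "\<alpha>' \<notin> N"
  proof (cases "\<alpha> \<notin> N")
    case True thus ?thesis using that Luw vab by blast
  next
    case False
    hence "\<beta> \<notin> N" using ab by simp
    moreover have "spanf w u (\<beta>, \<alpha>) = v"
    proof -
      obtain u1 u2 u3 where u: "u = (u1,u2,u3)" by (cases u) auto
      obtain w1 w2 w3 where w: "w = (w1,w2,w3)" by (cases w) auto
      show ?thesis using vab by (simp add: u w add.commute)
    qed
    moreover have "inj (spanf w u)" by (rule inj_transfer[OF span_comm Luw(2)])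
    ultimately show ?thesis using that Luw span_comm by metis
  qed
  obtain ai where ai: "\<alpha>' * ai = 1" "ai * \<alpha>' = 1" using unit_ex L2(4) by blast
  obtain u1 u2 u3 where u: "u' = (u1,u2,u3)" by (cases u') auto
  obtain w1 w2 w3 where w: "w' = (w1,w2,w3)" by (cases w') auto
  have hlp: "\<And>u1 w1. u1 = (u1*\<alpha>' + w1*\<beta>')*ai + w1*(-(\<beta>'*ai))"
    using ai by (simp add: algebra_simps mult.assoc)
  have comps: "1 = u1*\<alpha>' + w1*\<beta>'" "b = u2*\<alpha>' + w2*\<beta>'" "c = u3*\<alpha>' + w3*\<beta>'"
    using L2(3) by (simp_all add: u w v_def)
  have "u' = spanf v w' (ai, -(\<beta>'*ai))"
    apply (simp add: u w v_def)
    using hlp[of u1 w1] hlp[of u2 w2] hlp[of u3 w3] comps by simp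
  hence L3: "L = range (spanf v w')"
    using span_eq[of v u' w' w'] L2(1,3) span_mem2 by (metis rangeI)
  define w'' where "w'' = (0::'a, w2 - b*w1, w3 - c*w1)"
  have "w'' = spanf v w' (-w1, 1)" by (simp add: w''_def w v_def algebra_simps)
  moreover have "w' = spanf v w'' (w1, 1)" by (simp add: w''_def w v_def algebra_simps)
  ultimately have L4: "L = range (spanf v w'')"
    using span_eq[of v v w' w''] L3 span_mem1 by (metis rangeI)
  have inj4: "inj (spanf v w'')" using inj_transfer L4 L2 by metis
  define x where "x = w2 - b*w1"
  define y where "y = w3 - c*w1"
  have w''xy: "w'' = (0,x,y)" by (simp add: w''_def x_def y_def)
  show ?thesis
  proof (cases "x \<in> N")
    case False
    obtain xi where xi: "x * xi = 1" "xi * x = 1" using unit_ex False by blast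
    define z where "z = (0::'a,1::'a,y*xi)"
    have "z = spanf v w'' (0, xi)" by (simp add: z_def w''xy v_def xi)
    moreover have "w'' = spanf v z (0, x)" by (simp add: z_def w''xy v_def xi mult.assoc)
    ultimately have "L = range (spanf v z)"
      using span_eq[of v v z w''] L4 span_mem1 by (metis rangeI)
    moreover have "z \<in> Zset" by (simp add: Zset_def z_def)
    ultimately show ?thesis unfolding v_def by blast
  next
    case xN: True
    show ?thesis
    proof (cases "y \<in> N")
      case False
      obtain yi where yi: "y * yi = 1" "yi * y = 1" using unit_ex False by blast
      define z where "z = (0::'a,x*yi,1::'a)"
      have "z = spanf v w'' (0, yi)" by (simp add: z_def w''xy v_def yi)
      moreover have "w'' = spanf v z (0, y)" by (simp add: z_def w''xy v_def yi mult.assoc)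
      ultimately have "L = range (spanf v z)"
        using span_eq[of v v z w''] L4 span_mem1 by (metis rangeI)
      moreover have "z \<in> Zset" using Nmr[OF xN] by (simp add: Zset_def z_def)
      ultimately show ?thesis unfolding v_def by blast
    next
      case yN: True
      obtain t where t: "t \<in> N" "t \<noteq> 0" using ex_nz by blast
      have "spanf v w'' (0, t) = spanf v w'' (0, 0)"
        using NN[OF xN t(1)] NN[OF yN t(1)] by (simp add: w''xy v_def)
      hence "(0::'a, t) = (0, 0)" using inj4 by (meson injD)
      thus ?thesis using t by simp
    qed
  qed
qed

end

context cr2 begin

lemma decomp:
  "\<exists>z2 z3 t. (0,z2,z3) \<in> Zset \<and> z2*t = x \<and> z3*t = y"
proof (cases "x \<in> N")
  case False
  obtain xi where xi: "x * xi = 1" "xi * x = 1" using unit_ex False by blast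
  have "(0::'a,1::'a,y*xi) \<in> Zset" by (simp add: Zset_def)
  moreover have "1*x = x" "y*xi*x = y" by (simp_all add: mult.assoc xi)
  ultimately show ?thesis by blast
next
  case xN: True
  show ?thesis
  proof (cases "y \<in> N")
    case False
    obtain yi where yi: "y * yi = 1" "yi * y = 1" using unit_ex False by blast
    have "(0::'a,x*yi,1::'a) \<in> Zset" using Nmr[OF xN] by (simp add: Zset_def)
    moreover have "x*yi*y = x" "1*y = y" by (simp_all add: mult.assoc yi)
    ultimately show ?thesis by blast
  next
    case yN: True
    show ?thesis
    proof (cases "x = 0")
      case True
      have "(0::'a,0::'a,1::'a) \<in> Zset" using N0 by (simp add: Zset_def)
      moreover have "0*y = x" "1*y = y" by (simp_all add: True)
      ultimately show ?thesis by blast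
    next
      case False
      obtain c0 where "c0 * x = y" using lgen[OF xN False yN] by blast
      moreover have "(0::'a,1::'a,c0) \<in> Zset" by (simp add: Zset_def)
      ultimately show ?thesis by (metis mult_1_left)
    qed
  qed
qed

lemma lineB:
  fixes w :: "'a \<times> 'a \<times> 'a"
  shows "\<exists>L\<in>PHG_lines. range (smulr (1,b,c)) \<subseteq> L \<and> range (smulr w) \<subseteq> L"
proof -
  obtain w1 w2 w3 where w: "w = (w1,w2,w3)" by (cases w) auto
  obtain z2 z3 t where z: "(0,z2,z3) \<in> Zset" "z2*t = w2 - b*w1" "z3*t = w3 - c*w1"
    using decomp by blast
  have "w = spanf (1,b,c) (0,z2,z3) (w1,t)" using z by (simp add: w)
  hence "range (smulr w) \<subseteq> range (spanf (1,b,c) (0,z2,z3))"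
    by (metis point_sub_span rangeI)
  moreover have "range (smulr (1,b,c)) \<subseteq> range (spanf (1,b,c) (0,z2,z3))"
    by (rule point_sub_span[OF span_mem1])
  ultimately show ?thesis using Zset_lines[OF z(1)] by blast
qed

lemma lineC:
  assumes xN: "x \<in> N" and yN: "y \<in> N" and nz: "\<not> (x = 0 \<and> y = 0)"
  shows "card N \<le> card {L\<in>PHG_lines. range (smulr (1,b,c)) \<subseteq> L
                         \<and> range (smulr (1,b+x,c+y)) \<subseteq> L}"
    (is "_ \<le> card ?S")
proof -
  define v where "v = (1::'a,b,c)"
  have ex: "\<exists>h. inj_on h N \<and> h ` N \<subseteq> ?S"
  proof (cases "x = 0")
    case False
    obtain c0 where c0: "c0 * x = y" using lgen[OF xN False yN] by blast
    define h where "h n = range (spanf v (0,1,c0+n))" for n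
    have "h ` N \<subseteq> ?S"
    proof
      fix L assume "L \<in> h ` N"
      then obtain n where n: "n \<in> N" "L = h n" by auto
      have "(0::'a,1::'a,c0+n) \<in> Zset" by (simp add: Zset_def)
      hence "L \<in> PHG_lines" using Zset_lines n unfolding h_def v_def by blast
      moreover have "range (smulr v) \<subseteq> L" unfolding n h_def by (rule point_sub_span[OF span_mem1])
      moreover have "(1,b+x,c+y) = spanf v (0,1,c0+n) (1,x)"
        using c0 NN[OF n(1) xN] by (simp add: v_def distrib_right)
      hence "range (smulr (1,b+x,c+y)) \<subseteq> L" unfolding n h_def by (metis point_sub_span rangeI)
      ultimately show "L \<in> ?S" unfolding v_def by blast
    qed
    moreover have "inj_on h N"
    proof (rule inj_onI)
      fix n n' assume "n \<in> N" "n' \<in> N" "h n = h n'"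
      hence "(0,1,c0+n) \<in> range (spanf v (0,1,c0+n'))" unfolding h_def using span_mem2 by metis
      then obtain r s where "(0,1,c0+n) = spanf v (0,1,c0+n') (r,s)" by auto
      thus "n = n'" by (auto simp add: v_def)
    qed
    ultimately show ?thesis by blast
  next
    case True
    hence y0: "y \<noteq> 0" using nz by simp
    define h where "h n = range (spanf v (0,n,1))" for n
    have "h ` N \<subseteq> ?S"
    proof
      fix L assume "L \<in> h ` N"
      then obtain n where n: "n \<in> N" "L = h n" by auto
      have "(0::'a,n,1::'a) \<in> Zset" using n by (simp add: Zset_def)
      hence "L \<in> PHG_lines" using Zset_lines n unfolding h_def v_def by blast
      moreover have "range (smulr v) \<subseteq> L" unfolding n h_def by (rule point_sub_span[OF span_mem1])
      moreover have "(1,b+x,c+y) = spanf v (0,n,1) (1,y)"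
        using True NN[OF n(1) yN] by (simp add: v_def)
      hence "range (smulr (1,b+x,c+y)) \<subseteq> L" unfolding n h_def by (metis point_sub_span rangeI)
      ultimately show "L \<in> ?S" unfolding v_def by blast
    qed
    moreover have "inj_on h N"
    proof (rule inj_onI)
      fix n n' assume "n \<in> N" "n' \<in> N" "h n = h n'"
      hence "(0,n,1) \<in> range (spanf v (0,n',1))" unfolding h_def using span_mem2 by metis
      then obtain r s where "(0,n,1) = spanf v (0,n',1) (r,s)" by auto
      thus "n = n'" by (auto simp add: v_def)
    qed
    ultimately show ?thesis by blast
  qed
  then obtain h where h: "inj_on h N" "h ` N \<subseteq> ?S" by blast
  have "card N = card (h ` N)" using h(1) by (simp add: card_image)
  also have "\<dots> \<le> card ?S" using h(2) by (intro card_mono) auto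
  finally show ?thesis .
qed

end

fun rot :: "'a \<times> 'a \<times> 'a \<Rightarrow> 'a \<times> 'a \<times> 'a" where "rot (a,b,c) = (b,c,a)"

lemma rot3: "rot (rot (rot v)) = v" by (cases v) auto
lemma inj_rot: "inj rot"
proof (rule injI)
  fix x y :: "'a \<times> 'a \<times> 'a" assume "rot x = rot y"
  hence "rot (rot (rot x)) = rot (rot (rot y))" by simp
  thus "x = y" by (simp only: rot3)
qed
lemma rot_smulr: "rot (smulr v r) = smulr (rot v) r" by (cases v) auto
lemma rot_spanf: "rot (spanf u w p) = spanf (rot u) (rot w) p"
  by (cases u, cases w, cases p) auto
lemma rot_range_smulr: "rot ` range (smulr v) = range (smulr (rot v))"
  by (simp add: image_image rot_smulr)
lemma rot_range_spanf: "rot ` range (spanf u w) = range (spanf (rot u) (rot w))"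
  by (simp add: image_image rot_spanf)

lemma inj_rot_comp: "inj (rot \<circ> f) \<longleftrightarrow> inj f"
proof
  assume "inj (rot \<circ> f)" thus "inj f" by (rule inj_on_imageI2)
next
  assume "inj f" thus "inj (rot \<circ> f)" by (rule inj_compose[OF inj_rot])
qed

lemma rot_line: "L \<in> PHG_lines \<Longrightarrow> rot ` L \<in> PHG_lines"
proof -
  assume "L \<in> PHG_lines"
  then obtain u w where L: "L = range (spanf u w)" "inj (spanf u w)" using lines_iff by blast
  have "spanf (rot u) (rot w) = rot \<circ> spanf u w" by (auto simp: rot_spanf)
  moreover have "inj (rot \<circ> spanf u w)" using L(2) inj_rot_comp by blast
  ultimately have "inj (spanf (rot u) (rot w))" by (simp only:)
  moreover have "rot ` L = range (spanf (rot u) (rot w))" using L(1) rot_range_spanf by simp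
  ultimately show ?thesis unfolding lines_iff by (intro exI[of _ "rot u"] exI[of _ "rot w"] conjI)
qed

lemma rot_img3: "rot ` rot ` rot ` X = X"
  by (simp only: image_image rot3 image_ident)

lemma card_rot:
  "card {L\<in>PHG_lines. rot ` A \<subseteq> L \<and> rot ` B \<subseteq> L} = card {L\<in>PHG_lines. A \<subseteq> L \<and> B \<subseteq> L}"
proof -
  let ?S = "{L\<in>PHG_lines. A \<subseteq> L \<and> B \<subseteq> L}"
  let ?T = "{L\<in>PHG_lines. rot ` A \<subseteq> L \<and> rot ` B \<subseteq> L}"
  have inj: "inj_on (\<lambda>L. rot ` L) ?S"
  proof (rule inj_onI)
    fix X Y assume "rot ` X = rot ` Y"
    thus "X = Y" unfolding inj_image_eq_iff[OF inj_rot] .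
  qed
  have eq: "(\<lambda>L. rot ` L) ` ?S = ?T"
  proof
    show "(\<lambda>L. rot ` L) ` ?S \<subseteq> ?T"
    proof
      fix L' assume "L' \<in> (\<lambda>L. rot ` L) ` ?S"
      then obtain L where L: "L \<in> ?S" and L': "L' = rot ` L" by (rule imageE)
      have L1: "L \<in> PHG_lines" and L2: "A \<subseteq> L" and L3: "B \<subseteq> L" using L by simp_all
      have "rot ` L \<in> PHG_lines" using L1 by (rule rot_line)
      moreover have "rot ` A \<subseteq> rot ` L" using L2 by (rule image_mono)
      moreover have "rot ` B \<subseteq> rot ` L" using L3 by (rule image_mono)
      ultimately show "L' \<in> ?T" unfolding L' by simp
    qed
  next
    show "?T \<subseteq> (\<lambda>L. rot ` L) ` ?S"
    proof
      fix L assume L: "L \<in> ?T"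
      define L' where "L' = rot ` rot ` L"
      have L1: "L \<in> PHG_lines" and LA: "rot ` A \<subseteq> L" and LB: "rot ` B \<subseteq> L" using L by simp_all
      have "L' \<in> PHG_lines" unfolding L'_def by (intro rot_line L1)
      moreover have "rot ` rot ` rot ` A \<subseteq> L'" "rot ` rot ` rot ` B \<subseteq> L'"
        unfolding L'_def by (intro image_mono LA LB)+
      hence "A \<subseteq> L'" "B \<subseteq> L'" by (simp_all only: rot_img3)
      ultimately have "L' \<in> ?S" by simp
      moreover have "L = rot ` L'" unfolding L'_def by (rule rot_img3[symmetric])
      ultimately show "L \<in> (\<lambda>L. rot ` L) ` ?S" by (rule rev_image_eqI)
    qed
  qed
  have "card ((\<lambda>L. rot ` L) ` ?S) = card ?S" by (rule card_image[OF inj])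
  thus ?thesis unfolding eq .
qed

lemma range_smulr_unit:
  assumes "u * ui = 1" "ui * u = 1"
  shows "range (smulr (smulr v u)) = range (smulr v)"
proof -
  obtain a b c where v: "v = (a,b,c)" by (cases v)
  show ?thesis
  proof
    show "range (smulr (smulr v u)) \<subseteq> range (smulr v)"
    proof
      fix z assume "z \<in> range (smulr (smulr v u))"
      then obtain r where "z = smulr (smulr v u) r" by auto
      hence "z = smulr v (u * r)" by (simp add: v mult.assoc)
      thus "z \<in> range (smulr v)" by blast
    qed
    show "range (smulr v) \<subseteq> range (smulr (smulr v u))"
    proof
      fix z assume "z \<in> range (smulr v)"
      then obtain r where "z = smulr v r" by auto
      have e: "\<And>r. u * (ui * r) = r" by (simp add: mult.assoc[symmetric] assms)
      from \<open>z = smulr v r\<close> have "z = smulr (smulr v u) (ui * r)"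
        by (simp add: v mult.assoc e)
      thus "z \<in> range (smulr (smulr v u))" by blast
    qed
  qed
qed

context cr2 begin

definition unimod :: "'a \<times> 'a \<times> 'a \<Rightarrow> bool" where
  "unimod v \<longleftrightarrow> fst v \<notin> N \<or> fst (snd v) \<notin> N \<or> snd (snd v) \<notin> N"

definition diffN :: "'a \<times> 'a \<times> 'a \<Rightarrow> 'a \<times> 'a \<times> 'a \<Rightarrow> bool" where
  "diffN v w \<longleftrightarrow> fst w - fst v \<in> N \<and> fst (snd w) - fst (snd v) \<in> N \<and> snd (snd w) - snd (snd v) \<in> N"

definition nbr :: "('a \<times> 'a \<times> 'a) set \<Rightarrow> ('a \<times> 'a \<times> 'a) set \<Rightarrow> bool" where
  "nbr P Q \<longleftrightarrow> (\<exists>v w. P = range (smulr v) \<and> Q = range (smulr w) \<and> unimod v \<and> diffN v w)"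

lemma reduce:
  assumes H: "\<And>v1 v2 v3 w. v1 \<notin> N \<Longrightarrow> R (v1,v2,v3) w \<Longrightarrow>
        \<Phi> (card {L\<in>PHG_lines. range (smulr (v1,v2,v3)) \<subseteq> L \<and> range (smulr w) \<subseteq> L})"
    and Rrot: "\<And>v w. R v w \<Longrightarrow> R (rot v) (rot w)"
    and um: "unimod v" and Rvw: "R v w"
  shows "\<Phi> (card {L\<in>PHG_lines. range (smulr v) \<subseteq> L \<and> range (smulr w) \<subseteq> L})"
proof -
  obtain a b c where v: "v = (a,b,c)" by (cases v)
  have rr: "\<And>v w. card {L\<in>PHG_lines. range (smulr (rot v)) \<subseteq> L \<and> range (smulr (rot w)) \<subseteq> L}
            = card {L\<in>PHG_lines. range (smulr v) \<subseteq> L \<and> range (smulr w) \<subseteq> L}"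
    unfolding rot_range_smulr[symmetric] by (rule card_rot)
  consider "a \<notin> N" | "b \<notin> N" | "c \<notin> N" using um by (auto simp: unimod_def v)
  thus ?thesis
  proof cases
    case 1
    have "R (a,b,c) w" using Rvw unfolding v .
    hence "\<Phi> (card {L\<in>PHG_lines. range (smulr (a,b,c)) \<subseteq> L \<and> range (smulr w) \<subseteq> L})"
      by (rule H[OF 1])
    thus ?thesis unfolding v .
  next
    case 2
    have rv: "rot v = (b,c,a)" by (simp add: v)
    have R2: "R (b,c,a) (rot w)" using Rrot[OF Rvw] unfolding rv .
    have "\<Phi> (card {L\<in>PHG_lines. range (smulr (b,c,a)) \<subseteq> L \<and> range (smulr (rot w)) \<subseteq> L})"
      using 2 R2 by (rule H)
    thus ?thesis by (simp only: rr[of v w, unfolded rv])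
  next
    case 3
    have rv: "rot (rot v) = (c,a,b)" by (simp add: v)
    have R3: "R (c,a,b) (rot (rot w))" using Rrot[OF Rrot[OF Rvw]] unfolding rv .
    have "\<Phi> (card {L\<in>PHG_lines. range (smulr (c,a,b)) \<subseteq> L \<and> range (smulr (rot (rot w))) \<subseteq> L})"
      using 3 R3 by (rule H)
    thus ?thesis by (simp only: rr[of "rot v" "rot w", unfolded rv] rr[of v w])
  qed
qed

lemma point_unimod:
  assumes "P \<in> PHG_points" shows "\<exists>v. P = range (smulr v) \<and> unimod v"
proof -
  obtain v where v: "P = range (smulr v)" "inj (smulr v)" using assms points_iff by blast
  obtain a b c where abc: "v = (a,b,c)" by (cases v)
  have "unimod v"
  proof (rule ccontr)
    assume "\<not> unimod v"
    hence "a \<in> N" "b \<in> N" "c \<in> N" by (auto simp: unimod_def abc)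
    obtain t where t: "t \<in> N" "t \<noteq> 0" using ex_nz by blast
    have "smulr v t = smulr v 0" using NN t(1) \<open>a \<in> N\<close> \<open>b \<in> N\<close> \<open>c \<in> N\<close> by (simp add: abc)
    thus False using v(2) t(2) by (meson injD)
  qed
  thus ?thesis using v by blast
qed

end

context cr2 begin

lemma normalize1:
  assumes "v1 \<notin> N"
  obtains b c where "range (smulr (v1,v2,v3)) = range (smulr (1,b,c))"
proof -
  obtain vi where vi: "v1 * vi = 1" "vi * v1 = 1" using unit_ex assms by blast
  have "range (smulr (smulr (v1,v2,v3) vi)) = range (smulr (v1,v2,v3))"
    using range_smulr_unit[OF vi(2) vi(1)] .
  moreover have "smulr (v1,v2,v3) vi = (1, v2*vi, v3*vi)" using vi by simp
  ultimately show ?thesis using that by metis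
qed

lemma GA1:
  assumes "v1 \<notin> N"
  shows "card {L\<in>PHG_lines. range (smulr (v1,v2,v3)) \<subseteq> L \<and> range (smulr (v1,v2,v3)) \<subseteq> L}
         \<le> card (UNIV :: 'a set) + card N"
proof -
  obtain b c where bc: "range (smulr (v1,v2,v3)) = range (smulr (1,b,c))"
    using normalize1[OF assms] by blast
  have "{L\<in>PHG_lines. range (smulr (v1,v2,v3)) \<subseteq> L \<and> range (smulr (v1,v2,v3)) \<subseteq> L}
        \<subseteq> (\<lambda>z. range (spanf (1,b,c) z)) ` Zset"
  proof
    fix L assume "L \<in> {L\<in>PHG_lines. range (smulr (v1,v2,v3)) \<subseteq> L \<and> range (smulr (v1,v2,v3)) \<subseteq> L}"
    hence L1: "L \<in> PHG_lines" and L2: "range (smulr (1,b,c)) \<subseteq> L" unfolding bc by simp_all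
    obtain z where zZ: "z \<in> Zset" and Lz: "L = range (spanf (1,b,c) z)" using lineA[OF L1 L2] by (elim bexE)
    show "L \<in> (\<lambda>z. range (spanf (1,b,c) z)) ` Zset" unfolding Lz using zZ by (rule imageI)
  qed
  hence "card {L\<in>PHG_lines. range (smulr (v1,v2,v3)) \<subseteq> L \<and> range (smulr (v1,v2,v3)) \<subseteq> L}
        \<le> card ((\<lambda>z. range (spanf (1,b,c) z)) ` Zset)" by (intro card_mono) auto
  also have "\<dots> \<le> card Zset" by (rule card_image_le) simp
  finally show ?thesis using card_Zset by linarith
qed

lemma GB1:
  fixes w :: "'a \<times> 'a \<times> 'a"
  assumes "v1 \<notin> N"
  shows "1 \<le> card {L\<in>PHG_lines. range (smulr (v1,v2,v3)) \<subseteq> L \<and> range (smulr w) \<subseteq> L}"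
proof -
  obtain b c where bc: "range (smulr (v1,v2,v3)) = range (smulr (1,b,c))"
    using normalize1[OF assms] by blast
  obtain L where "L\<in>PHG_lines" "range (smulr (1,b,c)) \<subseteq> L" "range (smulr w) \<subseteq> L"
    using lineB[of b c w] by (elim bexE conjE)
  hence "L \<in> {L\<in>PHG_lines. range (smulr (v1,v2,v3)) \<subseteq> L \<and> range (smulr w) \<subseteq> L}"
    unfolding bc by simp
  hence "{L\<in>PHG_lines. range (smulr (v1,v2,v3)) \<subseteq> L \<and> range (smulr w) \<subseteq> L} \<noteq> {}"
    by blast
  thus ?thesis by (simp add: Suc_le_eq card_gt_0_iff)
qed

lemma GC1:
  fixes w :: "'a \<times> 'a \<times> 'a"
  assumes v1: "v1 \<notin> N" and d: "diffN (v1,v2,v3) w"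
    and ne: "range (smulr (v1,v2,v3)) \<noteq> range (smulr w)"
  shows "card N \<le> card {L\<in>PHG_lines. range (smulr (v1,v2,v3)) \<subseteq> L \<and> range (smulr w) \<subseteq> L}"
proof -
  obtain w1 w2 w3 where w: "w = (w1,w2,w3)" by (cases w)
  have dN: "w1 - v1 \<in> N" "w2 - v2 \<in> N" "w3 - v3 \<in> N" using d by (simp_all add: diffN_def w)
  obtain vi where vi: "v1 * vi = 1" "vi * v1 = 1" using unit_ex v1 by blast
  define e where "e = (w1 - v1) * vi"
  have eN: "e \<in> N" unfolding e_def using Nmr dN(1) by blast
  have ee: "e * e = 0" using NN eN by blast
  define s where "s = 1 - e"
  have s1: "(1 + e) * s = 1" "s * (1 + e) = 1" using ee by (simp_all add: s_def algebra_simps)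
  have w1vi: "w1 * vi = 1 + e" unfolding e_def using vi by (simp add: algebra_simps)
  have rP: "range (smulr (v1,v2,v3)) = range (smulr (1, v2*vi, v3*vi))"
    using range_smulr_unit[OF vi(2) vi(1), of "(v1,v2,v3)"] vi by simp
  have "range (smulr (smulr (smulr w vi) s)) = range (smulr w)"
    using range_smulr_unit[OF s1(2) s1(1), of "smulr w vi"] range_smulr_unit[OF vi(2) vi(1), of w] by simp
  moreover have "smulr (smulr w vi) s = (1, w2*vi*s, w3*vi*s)"
    using s1 by (simp add: w w1vi)
  ultimately have rQ: "range (smulr w) = range (smulr (1, w2*vi*s, w3*vi*s))" by simp
  have key: "\<And>a b. b - a \<in> N \<Longrightarrow> b*vi*s - a*vi \<in> N"
  proof -
    fix a b assume h: "b - a \<in> N"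
    have "(b-a)*vi*s - a*vi*e*s = b*vi*s - a*vi*((1+e)*s)" by (simp add: algebra_simps)
    also have "\<dots> = b*vi*s - a*vi" using s1 by simp
    finally have "b*vi*s - a*vi = (b-a)*vi*s - a*vi*e*s" by simp
    moreover have "(b-a)*vi*s \<in> N" using Nmr h by blast
    moreover have "a*vi*e*s \<in> N" using Nml Nmr eN by (metis mult.assoc)
    ultimately show "b*vi*s - a*vi \<in> N" using Ndiff by simp
  qed
  define x where "x = w2*vi*s - v2*vi"
  define y where "y = w3*vi*s - v3*vi"
  have xN: "x \<in> N" and yN: "y \<in> N" unfolding x_def y_def using key dN by auto
  have eq: "(1, v2*vi + x, v3*vi + y) = (1, w2*vi*s, w3*vi*s)" by (simp add: x_def y_def)
  have nz: "\<not> (x = 0 \<and> y = 0)"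
  proof
    assume "x = 0 \<and> y = 0"
    hence "(1, w2*vi*s, w3*vi*s) = (1::'a, v2*vi, v3*vi)" using eq by simp
    thus False using ne rP rQ by simp
  qed
  have "card N \<le> card {L\<in>PHG_lines. range (smulr (1::'a, v2*vi, v3*vi)) \<subseteq> L \<and> range (smulr (1, v2*vi + x, v3*vi + y)) \<subseteq> L}"
    by (rule lineC[OF xN yN nz])
  thus ?thesis unfolding eq rP rQ .
qed

lemma GA:
  fixes P :: "('a \<times> 'a \<times> 'a) set"
  assumes "P \<in> PHG_points"
  shows "card {L\<in>PHG_lines. P \<subseteq> L \<and> P \<subseteq> L} \<le> card (UNIV :: 'a set) + card N"
proof -
  obtain v where v: "P = range (smulr v)" "unimod v" using point_unimod assms by blast
  have "(\<lambda>k. k \<le> card (UNIV :: 'a set) + card N)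
          (card {L\<in>PHG_lines. range (smulr v) \<subseteq> L \<and> range (smulr v) \<subseteq> L})"
  proof (rule reduce[where R = "\<lambda>v w. w = v", OF _ _ v(2)])
    show "\<And>v1 v2 v3 w. v1 \<notin> N \<Longrightarrow> w = (v1,v2,v3) \<Longrightarrow> card {L\<in>PHG_lines. range (smulr (v1,v2,v3)) \<subseteq> L \<and> range (smulr w) \<subseteq> L} \<le> card (UNIV :: 'a set) + card N"
      using GA1 by simp
  qed simp_all
  thus ?thesis using v by simp
qed

lemma GB:
  fixes P Q :: "('a \<times> 'a \<times> 'a) set"
  assumes "P \<in> PHG_points" "Q \<in> PHG_points"
  shows "1 \<le> card {L\<in>PHG_lines. P \<subseteq> L \<and> Q \<subseteq> L}"
proof -
  obtain v where v: "P = range (smulr v)" "unimod v" using point_unimod assms by blast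
  obtain w where w: "Q = range (smulr w)" "unimod w" using point_unimod assms by blast
  have "(\<lambda>k. 1 \<le> k) (card {L\<in>PHG_lines. range (smulr v) \<subseteq> L \<and> range (smulr w) \<subseteq> L})"
  proof (rule reduce[where R = "\<lambda>v w. True", OF _ _ v(2)])
    show "\<And>v1 v2 v3 w. v1 \<notin> N \<Longrightarrow> True \<Longrightarrow> 1 \<le> card {L\<in>PHG_lines. range (smulr (v1,v2,v3)) \<subseteq> L \<and> range (smulr w) \<subseteq> L}"
      using GB1 by simp
  qed simp_all
  thus ?thesis using v w by simp
qed

lemma diffN_rot: "diffN v w \<Longrightarrow> diffN (rot v) (rot w)"
  by (cases v; cases w) (simp add: diffN_def)

lemma GC:
  fixes P Q :: "('a \<times> 'a \<times> 'a) set"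
  assumes "nbr P Q" "P \<noteq> Q"
  shows "card N \<le> card {L\<in>PHG_lines. P \<subseteq> L \<and> Q \<subseteq> L}"
proof -
  obtain v w where vw: "P = range (smulr v)" "Q = range (smulr w)" "unimod v" "diffN v w"
    using assms(1) unfolding nbr_def by (elim exE conjE)
  have Rrot: "\<And>v w. diffN v w \<and> range (smulr v) \<noteq> range (smulr w) \<Longrightarrow>
     diffN (rot v) (rot w) \<and> range (smulr (rot v)) \<noteq> range (smulr (rot w))"
  proof -
    fix v w :: "'a \<times> 'a \<times> 'a" assume h: "diffN v w \<and> range (smulr v) \<noteq> range (smulr w)"
    have "rot ` range (smulr v) \<noteq> rot ` range (smulr w)"
      using h unfolding inj_image_eq_iff[OF inj_rot] by (elim conjE)
    hence "range (smulr (rot v)) \<noteq> range (smulr (rot w))" unfolding rot_range_smulr .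
    moreover have "diffN (rot v) (rot w)" using h diffN_rot by blast
    ultimately show "diffN (rot v) (rot w) \<and> range (smulr (rot v)) \<noteq> range (smulr (rot w))" by (rule conjI[rotated])
  qed
  have "range (smulr v) \<noteq> range (smulr w)" using assms(2) unfolding vw(1,2) .
  with vw(4) have Rvw: "diffN v w \<and> range (smulr v) \<noteq> range (smulr w)" by (rule conjI)
  have "(\<lambda>k. card N \<le> k) (card {L\<in>PHG_lines. range (smulr v) \<subseteq> L \<and> range (smulr w) \<subseteq> L})"
  proof (rule reduce[where R = "\<lambda>v w. diffN v w \<and> range (smulr v) \<noteq> range (smulr w)", OF _ Rrot vw(3) Rvw])
    fix v1 v2 v3 w assume a: "v1 \<notin> N" and b: "diffN (v1,v2,v3) w \<and> range (smulr (v1,v2,v3)) \<noteq> range (smulr w)"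
    show "card N \<le> card {L\<in>PHG_lines. range (smulr (v1,v2,v3)) \<subseteq> L \<and> range (smulr w) \<subseteq> L}"
      by (rule GC1[OF a conjunct1[OF b] conjunct2[OF b]])
  qed
  thus ?thesis by (simp only: vw(1,2)[symmetric])
qed

end

lemma dcount:
  fixes R :: "'b \<Rightarrow> 'c \<Rightarrow> bool"
  assumes "finite A" "finite B"
  shows "(\<Sum>a\<in>A. card {b\<in>B. R a b}) = (\<Sum>b\<in>B. card {a\<in>A. R a b})"
proof -
  have e1: "\<And>a. card {b\<in>B. R a b} = (\<Sum>b\<in>B. if R a b then 1 else 0)"
    using assms(2) by (simp add: sum.inter_filter[symmetric])
  have e2: "\<And>b. card {a\<in>A. R a b} = (\<Sum>a\<in>A. if R a b then 1 else 0)"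
    using assms(1) by (simp add: sum.inter_filter[symmetric])
  show ?thesis unfolding e1 e2 by (rule sum.swap)
qed

lemma cs_sum:
  fixes a :: "'b \<Rightarrow> real"
  assumes "finite T"
  shows "(\<Sum>t\<in>T. a t)^2 \<le> real (card T) * (\<Sum>t\<in>T. (a t)^2)"
proof -
  have "0 \<le> (\<Sum>t\<in>T. \<Sum>s\<in>T. (a t - a s)^2)" by (intro sum_nonneg) auto
  also have "\<dots> = (\<Sum>t\<in>T. \<Sum>s\<in>T. (a t)^2 + (a s)^2 - 2 * (a t * a s))"
    by (intro sum.cong refl) (simp add: power2_diff)
  also have "\<dots> = (\<Sum>t\<in>T. \<Sum>s\<in>T. (a t)^2) + (\<Sum>t\<in>T. \<Sum>s\<in>T. (a s)^2) - 2 * (\<Sum>t\<in>T. \<Sum>s\<in>T. a t * a s)"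
    by (simp add: sum.distrib sum_subtractf sum_distrib_left)
  also have "(\<Sum>t\<in>T. \<Sum>s\<in>T. (a t)^2) = real (card T) * (\<Sum>t\<in>T. (a t)^2)"
    by (simp add: sum_distrib_left mult.commute)
  also have "(\<Sum>t\<in>T. \<Sum>s\<in>T. (a s)^2) = real (card T) * (\<Sum>t\<in>T. (a t)^2)"
    by simp
  also have "(\<Sum>t\<in>T. \<Sum>s\<in>T. a t * a s) = (\<Sum>t\<in>T. a t)^2"
    by (simp add: power2_eq_square sum_product)
  finally show ?thesis by simp
qed

lemma fiber_sq:
  fixes f :: "'b \<Rightarrow> 'c"
  assumes S: "finite S" and T: "finite T" and ST: "f ` S \<subseteq> T"
  shows "(\<Sum>x\<in>S. real (card {y\<in>S. f y = f x})) = (\<Sum>t\<in>T. (real (card {y\<in>S. f y = t}))^2)"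
    and "(\<Sum>t\<in>T. real (card {y\<in>S. f y = t})) = real (card S)"
proof -
  have "(\<Sum>x\<in>S. real (card {y\<in>S. f y = f x}))
        = (\<Sum>t\<in>T. \<Sum>x\<in>{x. x \<in> S \<and> f x = t}. real (card {y\<in>S. f y = f x}))"
    by (rule sum.group[OF S T ST, symmetric])
  also have "\<dots> = (\<Sum>t\<in>T. \<Sum>x\<in>{x. x \<in> S \<and> f x = t}. real (card {y\<in>S. f y = t}))"
    by (intro sum.cong refl) auto
  also have "\<dots> = (\<Sum>t\<in>T. (real (card {y\<in>S. f y = t}))^2)"
    by (intro sum.cong refl) (simp add: power2_eq_square)
  finally show "(\<Sum>x\<in>S. real (card {y\<in>S. f y = f x})) = (\<Sum>t\<in>T. (real (card {y\<in>S. f y = t}))^2)" .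
  have "(\<Sum>t\<in>T. real (card {y\<in>S. f y = t})) = (\<Sum>t\<in>T. \<Sum>x\<in>{x. x \<in> S \<and> f x = t}. (1::real))"
    by (intro sum.cong refl) simp
  also have "\<dots> = (\<Sum>x\<in>S. (1::real))" by (rule sum.group[OF S T ST])
  finally show "(\<Sum>t\<in>T. real (card {y\<in>S. f y = t})) = real (card S)" by simp
qed

context cr2 begin

definition normal :: "'a \<times> 'a \<times> 'a \<Rightarrow> bool" where
  "normal v \<longleftrightarrow> fst v = 1 \<or> (fst v \<in> N \<and> fst (snd v) = 1) \<or>
     (fst v \<in> N \<and> fst (snd v) \<in> N \<and> snd (snd v) = 1)"

lemma normal_ex:
  fixes P :: "('a \<times> 'a \<times> 'a) set"
  assumes "P \<in> PHG_points" shows "\<exists>v. P = range (smulr v) \<and> normal v"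
proof -
  obtain v where v: "P = range (smulr v)" "unimod v" using point_unimod[OF assms] by (elim exE conjE)
  obtain a b c where abc: "v = (a,b,c)" by (cases v)
  consider "a \<notin> N" | "a \<in> N" "b \<notin> N" | "a \<in> N" "b \<in> N" "c \<notin> N"
    using v(2) unfolding unimod_def abc by auto
  thus ?thesis
  proof cases
    case 1
    obtain ai where ai: "a*ai = 1" "ai*a = 1" using unit_ex[OF 1] by blast
    have "P = range (smulr (smulr v ai))" using range_smulr_unit[OF ai(2) ai(1), of v] v(1) by simp
    moreover have "normal (smulr v ai)" by (simp add: abc normal_def ai)
    ultimately show ?thesis by blast
  next
    case 2
    obtain bi where bi: "b*bi = 1" "bi*b = 1" using unit_ex[OF 2(2)] by blast
    have "P = range (smulr (smulr v bi))" using range_smulr_unit[OF bi(2) bi(1), of v] v(1) by simp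
    moreover have "normal (smulr v bi)" using Nmr[OF 2(1)] by (simp add: abc normal_def bi)
    ultimately show ?thesis by blast
  next
    case 3
    obtain ci where ci: "c*ci = 1" "ci*c = 1" using unit_ex[OF 3(3)] by blast
    have "P = range (smulr (smulr v ci))" using range_smulr_unit[OF ci(2) ci(1), of v] v(1) by simp
    moreover have "normal (smulr v ci)" using Nmr[OF 3(1)] Nmr[OF 3(2)] by (simp add: abc normal_def ci)
    ultimately show ?thesis by blast
  qed
qed

definition nf :: "('a \<times> 'a \<times> 'a) set \<Rightarrow> 'a \<times> 'a \<times> 'a" where
  "nf P = (SOME v. P = range (smulr v) \<and> normal v)"

lemma nf:
  fixes P :: "('a \<times> 'a \<times> 'a) set"
  assumes "P \<in> PHG_points" shows "P = range (smulr (nf P))" "normal (nf P)"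
  using someI_ex[OF normal_ex[OF assms]] unfolding nf_def by auto

definition fcls :: "('a \<times> 'a \<times> 'a) set \<Rightarrow> 'a set \<times> 'a set \<times> 'a set" where
  "fcls P = (coset (fst (nf P)), coset (fst (snd (nf P))), coset (snd (snd (nf P))))"

definition Tset :: "('a set \<times> 'a set \<times> 'a set) set" where
  "Tset = ({coset 1} \<times> range coset \<times> range coset) \<union> ({coset 0} \<times> {coset 1} \<times> range coset)
          \<union> {(coset 0, coset 0, coset 1)}"

lemma cosN: "x \<in> N \<Longrightarrow> coset x = coset 0" using coset_eq by simp

lemma fcls_T:
  fixes P :: "('a \<times> 'a \<times> 'a) set"
  assumes "P \<in> PHG_points" shows "fcls P \<in> Tset"
proof -
  obtain a b c where abc: "nf P = (a,b,c)" by (cases "nf P")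
  have n: "a = 1 \<or> (a \<in> N \<and> b = 1) \<or> (a \<in> N \<and> b \<in> N \<and> c = 1)"
    using nf(2)[OF assms] unfolding normal_def abc by simp
  have f: "fcls P = (coset a, coset b, coset c)" unfolding fcls_def abc by simp
  show ?thesis unfolding f Tset_def using n cosN by auto
qed

lemma card_Tset:
  assumes "card (range coset) = q" shows "card Tset \<le> q*q + q + 1"
proof -
  have "card Tset \<le> card ({coset 1} \<times> range coset \<times> range coset) + card ({coset 0} \<times> {coset 1} \<times> range coset)
          + card {(coset 0, coset 0, coset 1)}"
    unfolding Tset_def by (meson card_Un_le add_mono order_trans le_refl)
  also have "\<dots> = q*q + q + 1" using assms by (simp add: card_cartesian_product)
  finally show ?thesis .
qed

lemma fcls_nbr:
  fixes P Q :: "('a \<times> 'a \<times> 'a) set"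
  assumes P: "P \<in> PHG_points" and Q: "Q \<in> PHG_points" and e: "fcls P = fcls Q"
  shows "nbr P Q"
proof -
  obtain a b c where abc: "nf P = (a,b,c)" by (cases "nf P")
  obtain a' b' c' where abc': "nf Q = (a',b',c')" by (cases "nf Q")
  have "coset a' = coset a" "coset b' = coset b" "coset c' = coset c"
    using e unfolding fcls_def abc abc' by simp_all
  hence d: "diffN (nf P) (nf Q)" unfolding diffN_def abc abc' using coset_eq by simp
  have n: "a = 1 \<or> (a \<in> N \<and> b = 1) \<or> (a \<in> N \<and> b \<in> N \<and> c = 1)"
    using nf(2)[OF P] unfolding normal_def abc by simp
  have u: "unimod (nf P)" unfolding unimod_def abc using n one_notin by auto
  show ?thesis unfolding nbr_def using nf(1)[OF P] nf(1)[OF Q] u d by blast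
qed

end

context cr2 begin

lemma per_point:
  fixes S :: "('a \<times> 'a \<times> 'a) set set" and x :: "('a \<times> 'a \<times> 'a) set"
  assumes SP: "S \<subseteq> PHG_points" and fS: "finite S"
    and arcL: "\<forall>L\<in>PHG_lines. card {y\<in>S. y \<subseteq> L} \<le> n"
    and n1: "1 \<le> n" and xS: "x \<in> S" and qN: "card N = q" and Uq: "card (UNIV :: 'a set) = q * q"
  shows "real (card S) + (real q - 1) * real (card {y\<in>S. fcls y = fcls x})
         \<le> real q + (real q * real q + real q) * (real n - 1)"
proof -
  define lam where "lam y = card {L\<in>PHG_lines. x \<subseteq> L \<and> y \<subseteq> L}" for y
  define Lx where "Lx = {L\<in>PHG_lines. x \<subseteq> L \<and> x \<subseteq> L}"
  have xP: "x \<in> PHG_points" using SP xS by blast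
  have fL: "finite Lx" by simp
  have lamx: "lam x = card Lx" unfolding lam_def Lx_def ..
  have lamxq: "lam x \<le> q*q + q" using GA[OF xP] unfolding lam_def qN Uq .
  have s1: "(\<Sum>L\<in>Lx. card {y\<in>S. y \<subseteq> L}) \<le> card Lx * n"
  proof -
    have "(\<Sum>L\<in>Lx. card {y\<in>S. y \<subseteq> L}) \<le> of_nat (card Lx) * n"
      by (rule sum_bounded_above) (use arcL in \<open>auto simp: Lx_def\<close>)
    thus ?thesis by simp
  qed
  have s2: "(\<Sum>L\<in>Lx. card {y\<in>S. y \<subseteq> L}) = (\<Sum>y\<in>S. card {L\<in>Lx. y \<subseteq> L})"
    by (rule dcount[OF fL fS])
  have s3: "\<And>y. {L\<in>Lx. y \<subseteq> L} = {L\<in>PHG_lines. x \<subseteq> L \<and> y \<subseteq> L}"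
    unfolding Lx_def by blast
  have s4: "(\<Sum>y\<in>S. lam y) \<le> lam x * n"
    using s1 unfolding s2 s3 lamx[symmetric] lam_def by simp
  have s5: "(\<Sum>y\<in>S. lam y) = lam x + (\<Sum>y\<in>S-{x}. lam y)"
    by (rule sum.remove[OF fS xS])
  define \<phi> where "\<phi> y = 1 + (real q - 1) * (if fcls y = fcls x then 1 else 0)" for y
  have phix: "\<phi> x = real q" unfolding \<phi>_def by simp
  have phiy: "\<phi> y \<le> real (lam y)" if yS: "y \<in> S - {x}" for y
  proof -
    have yP: "y \<in> PHG_points" using SP yS by blast
    have g1: "1 \<le> lam y" unfolding lam_def by (rule GB[OF xP yP])
    show ?thesis
    proof (cases "fcls y = fcls x")
      case True
      have "nbr x y" by (rule fcls_nbr[OF xP yP True[symmetric]])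
      moreover have "x \<noteq> y" using yS by blast
      ultimately have "card N \<le> lam y" unfolding lam_def by (rule GC)
      thus ?thesis unfolding \<phi>_def qN using True by simp
    next
      case False
      thus ?thesis unfolding \<phi>_def using g1 by simp
    qed
  qed
  have fS': "finite (S - {x})" using fS by simp
  have "(\<Sum>y\<in>S. \<phi> y) = \<phi> x + (\<Sum>y\<in>S-{x}. \<phi> y)" by (rule sum.remove[OF fS xS])
  also have "\<dots> \<le> real q + (\<Sum>y\<in>S-{x}. real (lam y))"
    unfolding phix by (intro add_left_mono sum_mono phiy)
  also have "(\<Sum>y\<in>S-{x}. real (lam y)) = real (\<Sum>y\<in>S. lam y) - real (lam x)"
    unfolding s5 by simp
  also have "\<dots> \<le> real (lam x * n) - real (lam x)" using s4 by linarith
  also have "\<dots> = real (lam x) * (real n - 1)" by (simp add: algebra_simps)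
  also have "\<dots> \<le> (real q * real q + real q) * (real n - 1)"
  proof (rule mult_right_mono)
    show "real (lam x) \<le> real q * real q + real q" using lamxq by (metis of_nat_add of_nat_le_iff of_nat_mult)
    show "0 \<le> real n - 1" using n1 by simp
  qed
  finally have A: "(\<Sum>y\<in>S. \<phi> y) \<le> real q + (real q * real q + real q) * (real n - 1)" by simp
  have "(\<Sum>y\<in>S. \<phi> y) = (\<Sum>y\<in>S. 1) + (real q - 1) * (\<Sum>y\<in>S. (if fcls y = fcls x then 1 else 0))"
    unfolding \<phi>_def by (simp add: sum.distrib sum_distrib_left)
  also have "(\<Sum>y\<in>S. (if fcls y = fcls x then 1 else 0)) = real (card {y\<in>S. fcls y = fcls x})"
    using fS by (simp add: sum.inter_filter[symmetric])
  finally show ?thesis using A by simp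
qed

end

context cr2 begin

lemma main_bound:
  fixes S :: "('a \<times> 'a \<times> 'a) set set"
  assumes cardU: "card (UNIV :: 'a set) = q * card N"
    and arc: "proj_arc S k n" and n1: "1 \<le> n"
  shows "real k \<le> (real ((q + 1) * n) - real q) / real (q + 2) * real (q ^ 2 + q + 1)"
proof -
  have qN: "card N = q" and cosq: "card (range coset) = q" and Uq: "card (UNIV :: 'a set) = q * q"
    using card_N[OF cardU] by auto
  have q1: "1 \<le> q" using qN N0 by (metis One_nat_def Suc_leI card_gt_0_iff empty_iff finite)
  have SP: "S \<subseteq> PHG_points" and fS: "finite S" and kS: "card S = k"
    and arcL: "\<forall>L\<in>PHG_lines. card {x\<in>S. x \<subseteq> L} \<le> n"
    using arc unfolding proj_arc_def by auto
  define c where "c x = real (card {y\<in>S. fcls y = fcls x})" for x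
  define Q where "Q = real q"
  define K where "K = real k"
  define B where "B = Q + (Q * Q + Q) * (real n - 1)"
  define M where "M = Q * Q + Q + 1"
  define C where "C = (\<Sum>x\<in>S. c x)"
  have px: "K + (Q - 1) * c x \<le> B" if "x \<in> S" for x
    using per_point[OF SP fS arcL n1 that qN Uq] unfolding K_def Q_def B_def c_def kS .
  have "(\<Sum>x\<in>S. K + (Q - 1) * c x) \<le> (\<Sum>x\<in>S. B)" by (rule sum_mono) (rule px)
  hence I1: "K * K + (Q - 1) * C \<le> K * B"
    unfolding C_def by (simp add: sum.distrib sum_distrib_left kS K_def)
  have fT: "finite Tset" by simp
  have ST: "fcls ` S \<subseteq> Tset" using fcls_T SP by blast
  have "K^2 = (\<Sum>t\<in>Tset. real (card {y\<in>S. fcls y = t}))^2"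
    using fiber_sq(2)[OF fS fT ST] kS K_def by simp
  also have "\<dots> \<le> real (card Tset) * (\<Sum>t\<in>Tset. (real (card {y\<in>S. fcls y = t}))^2)"
    by (rule cs_sum[OF fT])
  also have "(\<Sum>t\<in>Tset. (real (card {y\<in>S. fcls y = t}))^2) = C"
    unfolding C_def c_def using fiber_sq(1)[OF fS fT ST] by simp
  also have "real (card Tset) \<le> M"
    using card_Tset[OF cosq] unfolding M_def Q_def by (metis of_nat_1 of_nat_add of_nat_le_iff of_nat_mult)
  hence "real (card Tset) * C \<le> M * C"
    by (rule mult_right_mono) (simp add: C_def c_def sum_nonneg)
  finally have I2: "K * K \<le> M * C" by (simp add: power2_eq_square)
  have Q1: "1 \<le> Q" using q1 Q_def by simp
  have Mpos: "0 < M" unfolding M_def using Q1 by (simp add: add_pos_nonneg)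
  have K0: "0 \<le> K" unfolding K_def by simp
  have n1': "1 \<le> real n" using n1 by simp
  have key: "K * (Q + 2) \<le> ((Q + 1) * real n - Q) * M"
  proof (cases "K = 0")
    case True
    have "0 \<le> (Q + 1) * real n - Q"
    proof -
      have "(Q + 1) * 1 \<le> (Q + 1) * real n" using n1' Q1 by (intro mult_left_mono) auto
      thus ?thesis by simp
    qed
    thus ?thesis using True Mpos by simp
  next
    case False
    hence Kp: "0 < K" using K0 by simp
    have "(Q - 1) * (K * K) \<le> (Q - 1) * (M * C)" using I2 Q1 by (intro mult_left_mono) auto
    hence "M * (K * K) + (Q - 1) * (K * K) \<le> M * (K * K) + (Q - 1) * (M * C)" by simp
    also have "\<dots> \<le> M * (K * B)"
    proof -
      have "M * (K * K + (Q - 1) * C) \<le> M * (K * B)" using I1 Mpos by (intro mult_left_mono) auto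
      thus ?thesis by (simp add: algebra_simps)
    qed
    finally have "K * (K * (M + Q - 1)) \<le> K * (M * B)" by (simp add: algebra_simps)
    hence "K * (M + Q - 1) \<le> M * B" using Kp by simp
    moreover have "M + Q - 1 = Q * (Q + 2)" unfolding M_def by (simp add: algebra_simps)
    moreover have "M * B = Q * (((Q + 1) * real n - Q) * M)" unfolding B_def by (simp add: algebra_simps)
    ultimately have "Q * (K * (Q + 2)) \<le> Q * (((Q + 1) * real n - Q) * M)" by (simp add: algebra_simps)
    thus ?thesis using Q1 by simp
  qed
  have "K \<le> ((Q + 1) * real n - Q) / (Q + 2) * M"
    using key Q1 by (simp add: field_simps)
  thus ?thesis unfolding K_def Q_def M_def by (simp add: algebra_simps power2_eq_square)
qed

end

theorem corollary4p9:
  fixes N :: "'a::{ring_1,finite} set" and q n :: nat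
  assumes "chain_ring_len2 N"
    and "card (UNIV :: 'a set) = q * card N"
    and "1 \<le> n" and "n \<le> q ^ 2 + q"
  shows "int (m_n TYPE('a) n)
           \<le> \<lfloor>(real ((q + 1) * n) - real q) / real (q + 2) * real (q ^ 2 + q + 1)\<rfloor>"
proof -
  interpret cr2 N by (unfold_locales) (rule assms(1))
  let ?A = "{k. \<exists>S :: ('a \<times> 'a \<times> 'a) set set. proj_arc S k n}"
  have "?A \<subseteq> {..card (UNIV :: ('a \<times> 'a \<times> 'a) set set)}"
  proof
    fix k assume "k \<in> ?A"
    then obtain S :: "('a \<times> 'a \<times> 'a) set set" where "proj_arc S k n" by blast
    hence "k = card S" unfolding proj_arc_def by simp
    also have "\<dots> \<le> card (UNIV :: ('a \<times> 'a \<times> 'a) set set)" by (rule card_mono) auto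
    finally show "k \<in> {..card (UNIV :: ('a \<times> 'a \<times> 'a) set set)}" by simp
  qed
  hence fin: "finite ?A" by (rule finite_subset) simp
  have "proj_arc ({} :: ('a \<times> 'a \<times> 'a) set set) 0 n" unfolding proj_arc_def by simp
  hence ne: "?A \<noteq> {}" by blast
  have "m_n TYPE('a) n \<in> ?A" unfolding m_n_def by (rule Max_in[OF fin ne])
  then obtain S :: "('a \<times> 'a \<times> 'a) set set" where S: "proj_arc S (m_n TYPE('a) n) n" by blast
  have "real (m_n TYPE('a) n) \<le> (real ((q + 1) * n) - real q) / real (q + 2) * real (q ^ 2 + q + 1)"
    by (rule main_bound[OF assms(2) S assms(3)])
  thus ?thesis by (simp add: le_floor_iff)
qed


end
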